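(* Let $f\colon\prod_{i\in[n]}X_i\to Y$ and let $\varphi_k\colon X_k\to Y$ ($k\in[n]$) be maps satisfying the boundary condition $\varphi_k(0_{X_k})\le\varphi_k(x_k)\le\varphi_k(1_{X_k})$ for all $x_k\in X_k$. Suppose that for every $k\in[n]$ and every $\mathbf{x}\in\prod_{i\in[n]}X_i$, $$f(\mathbf{x})=\operatorname{med}\big(f(\mathbf{x}_k^0),\varphi_k(x_k),f(\mathbf{x}_k^1)\big).$$ Then $f(\mathbf{x})=p_0(\varphi_1(x_1),\ldots,\varphi_n(x_n))$ for all $\mathbf{x}$, where $p_0\colon Y^n\to Y$ is the polynomial function $$p_0(y_1,\ldots,y_n)=\bigvee_{I\subseteq[n]}\Big(f(\widehat{\mathbf{1}}_I)\wedge\bigwedge_{i\in I}y_i\Big).$$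
   Context: $Y$ is a finite distributive lattice with operations $\wedge,\vee$, least element $0$ and greatest element $1$. $[n]=\{1,\ldots,n\}$. $X_1,\ldots,X_n$ are arbitrary sets with at least two elements, and in each $X_k$ two distinct elements $0_{X_k},1_{X_k}$ (written $0,1$) are fixed. For $\mathbf{x}\in\prod_{i\in[n]}X_i$ and $a\in X_k$, $\mathbf{x}_k^a$ denotes the tuple agreeing with $\mathbf{x}$ except that its $k$-th component is $a$. For $I\subseteq[n]$, $\widehat{\mathbf{1}}_I\in\prod_{i\in[n]}X_i$ is the tuple whose $i$-th component is $1_{X_i}$ if $i\in I$ and $0_{X_i}$ otherwise. $\operatorname{med}(y_1,y_2,y_3)=(y_1\wedge y_2)\vee(y_2\wedge y_3)\vee(y_3\wedge y_1)$. An empty meet $\bigwedge_{i\in\emptyset}y_i$ equals $1$. *)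

theory Defs
  imports Main "HOL-Library.FuncSet"
begin

definition med :: "'b::lattice \<Rightarrow> 'b \<Rightarrow> 'b \<Rightarrow> 'b" where
  "med y1 y2 y3 = sup (sup (inf y1 y2) (inf y2 y3)) (inf y3 y1)"

definition prodX :: "nat \<Rightarrow> (nat \<Rightarrow> 'a set) \<Rightarrow> (nat \<Rightarrow> 'a) set" where
  "prodX n X = PiE {1..n} X"

definition upd_at :: "(nat \<Rightarrow> 'a) \<Rightarrow> nat \<Rightarrow> 'a \<Rightarrow> (nat \<Rightarrow> 'a)" where
  "upd_at x k a = x(k := a)"

definition hat_one :: "nat \<Rightarrow> (nat \<Rightarrow> 'a) \<Rightarrow> (nat \<Rightarrow> 'a) \<Rightarrow> nat set \<Rightarrow> (nat \<Rightarrow> 'a)" where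
  "hat_one n zero one I = (\<lambda>i. if i \<in> {1..n} then (if i \<in> I then one i else zero i) else undefined)"

text \<open>The polynomial function p_0 (empty meet = top, via Inf {} = top).\<close>
definition p0 :: "nat \<Rightarrow> ((nat \<Rightarrow> 'a) \<Rightarrow> 'b::finite_distrib_lattice) \<Rightarrow> (nat \<Rightarrow> 'a) \<Rightarrow> (nat \<Rightarrow> 'a)
                   \<Rightarrow> (nat \<Rightarrow> 'b) \<Rightarrow> 'b" where
  "p0 n f zero one y = Sup ((\<lambda>I. inf (f (hat_one n zero one I)) (Inf (y ` I))) ` Pow {1..n})"

end

theory Submission
  imports Defs
begin

lemma med_le: fixes a b c :: "'b::distrib_lattice"
  assumes "a \<le> c" shows "med a b c = sup a (inf b c)"
proof -
  have "inf c a = a" using assms by (simp add: inf.absorb2)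
  hence "med a b c = sup (sup (inf a b) (inf b c)) a" unfolding med_def by simp
  also have "\<dots> = sup a (inf b c)"
    by (rule antisym) (auto simp: le_supI1 le_supI2)
  finally show ?thesis .
qed

lemma med_mono: fixes a p q c :: "'b::distrib_lattice"
  assumes "a = med a p c" "c = med a q c" "p \<le> q" shows "a \<le> c"
proof -
  have "med a p c \<le> sup p c" unfolding med_def
    by (auto simp: le_supI1 le_supI2)
  hence 1: "a \<le> sup p c" using assms(1) by simp
  have "inf a q \<le> med a q c" unfolding med_def
    by (simp add: inf_commute le_supI1)
  hence 2: "inf a q \<le> c" using assms(2) by simp
  have "sup p c \<le> sup q c" using assms(3) by (simp add: le_supI1)
  hence "a \<le> sup q c" using 1 by (rule order_trans[rotated])
  then have "a = inf a (sup q c)" by (simp add: inf.absorb1)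
  also have "\<dots> = sup (inf a q) (inf a c)" by (simp add: inf_sup_distrib1)
  also have "\<dots> \<le> c" using 2 by simp
  finally show ?thesis .
qed


theorem mainTheorem1:
  fixes n :: nat
    and X :: "nat \<Rightarrow> 'a set"
    and zero one :: "nat \<Rightarrow> 'a"
    and f :: "(nat \<Rightarrow> 'a) \<Rightarrow> 'b::finite_distrib_lattice"
    and \<phi> :: "nat \<Rightarrow> 'a \<Rightarrow> 'b"
  assumes zero_in: "\<And>k. k \<in> {1..n} \<Longrightarrow> zero k \<in> X k"
    and one_in: "\<And>k. k \<in> {1..n} \<Longrightarrow> one k \<in> X k"
    and zero_ne_one: "\<And>k. k \<in> {1..n} \<Longrightarrow> zero k \<noteq> one k"
    and boundary: "\<And>k a. k \<in> {1..n} \<Longrightarrow> a \<in> X k \<Longrightarrow>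
                     \<phi> k (zero k) \<le> \<phi> k a \<and> \<phi> k a \<le> \<phi> k (one k)"
    and median: "\<And>k x. k \<in> {1..n} \<Longrightarrow> x \<in> prodX n X \<Longrightarrow>
                   f x = med (f (upd_at x k (zero k))) (\<phi> k (x k)) (f (upd_at x k (one k)))"
  shows "\<forall>x \<in> prodX n X. f x = p0 n f zero one (\<lambda>i. \<phi> i (x i))"
proof -
  define sa :: "nat \<Rightarrow> (nat\<Rightarrow>'a) \<Rightarrow> nat set \<Rightarrow> nat \<Rightarrow> 'a" where
    "sa k x I = (\<lambda>i. if i \<in> {1..k} then (if i \<in> I then one i else zero i) else x i)" for k x I
  define g where
    "g k x = Sup ((\<lambda>I. inf (f (sa k x I)) (Inf ((\<lambda>i. \<phi> i (x i)) ` I))) ` Pow {1..k})" for k x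
  have upd_in: "z(k := a) \<in> prodX n X" if "z \<in> prodX n X" "k \<in> {1..n}" "a \<in> X k" for z k a
    using that unfolding prodX_def by (auto simp: PiE_def Pi_def extensional_def)
  have sa_in: "sa k x I \<in> prodX n X" if "x \<in> prodX n X" "k \<le> n" for x k I
    using that zero_in one_in unfolding prodX_def sa_def by (auto simp: PiE_def Pi_def extensional_def)
  have mono: "f (z(k := zero k)) \<le> f (z(k := one k))" if "z \<in> prodX n X" "k \<in> {1..n}" for z k
  proof (rule med_mono)
    have z0: "z(k := zero k) \<in> prodX n X" using upd_in that zero_in by blast
    have z1: "z(k := one k) \<in> prodX n X" using upd_in that one_in by blast
    show "f (z(k := zero k)) = med (f (z(k := zero k))) (\<phi> k (zero k)) (f (z(k := one k)))"
      using median[OF that(2) z0] by (simp add: upd_at_def)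
    show "f (z(k := one k)) = med (f (z(k := zero k))) (\<phi> k (one k)) (f (z(k := one k)))"
      using median[OF that(2) z1] by (simp add: upd_at_def)
    show "\<phi> k (zero k) \<le> \<phi> k (one k)" using boundary[OF that(2) one_in[OF that(2)]] by simp
  qed
  have main: "k \<le> n \<longrightarrow> (\<forall>x \<in> prodX n X. f x = g k x)" for k
  proof (induction k)
    case 0
    show ?case by (simp add: g_def sa_def)
  next
    case (Suc k)
    show ?case
    proof (intro impI ballI)
      fix x assume kn: "Suc k \<le> n" and x: "x \<in> prodX n X"
      define M where "M I = Inf ((\<lambda>i. \<phi> i (x i)) ` I)" for I
      define T where "T I = inf (f (sa (Suc k) x I)) (M I)" for I
      have sk: "Suc k \<in> {1..n}" using kn by simp
      have eq: "inf (f (sa k x I)) (M I) = sup (T I) (T (insert (Suc k) I))"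
        if I: "I \<subseteq> {1..k}" for I
      proof -
        let ?y = "sa k x I"
        have y: "?y \<in> prodX n X" using sa_in x kn by simp
        have y0: "?y(Suc k := zero (Suc k)) = sa (Suc k) x I"
          using I by (auto simp: sa_def fun_eq_iff le_Suc_eq)
        have y1: "?y(Suc k := one (Suc k)) = sa (Suc k) x (insert (Suc k) I)"
          using I by (auto simp: sa_def fun_eq_iff le_Suc_eq)
        have yk: "?y (Suc k) = x (Suc k)" by (simp add: sa_def)
        have fy: "f ?y = sup (f (sa (Suc k) x I)) (inf (\<phi> (Suc k) (x (Suc k))) (f (sa (Suc k) x (insert (Suc k) I))))"
          using median[OF sk y] mono[OF y sk] med_le y0 y1 yk by (simp add: upd_at_def)
        have Mi: "M (insert (Suc k) I) = inf (\<phi> (Suc k) (x (Suc k))) (M I)"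
          by (simp add: M_def)
        show ?thesis unfolding fy T_def Mi inf_sup_distrib2
          by (simp only: inf_assoc inf_commute inf_left_commute)
      qed
      have "f x = g k x" using Suc.IH kn x by simp
      also have "\<dots> = (SUP I\<in>Pow {1..k}. sup (T I) (T (insert (Suc k) I)))"
        unfolding g_def M_def[symmetric] by (rule SUP_cong) (auto simp: eq)
      also have "\<dots> = sup (SUP I\<in>Pow {1..k}. T I) (SUP I\<in>Pow {1..k}. T (insert (Suc k) I))"
        by (rule Complete_Lattices.SUP_sup_distrib[symmetric])
      also have "\<dots> = (SUP I\<in>Pow {1..k} \<union> insert (Suc k) ` Pow {1..k}. T I)"
        by (simp add: SUP_union image_image)
      also have "Pow {1..k} \<union> insert (Suc k) ` Pow {1..k} = Pow {1..Suc k}"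
        by (simp add: atLeastAtMostSuc_conv Pow_insert)
      also have "(SUP I\<in>Pow {1..Suc k}. T I) = g (Suc k) x"
        unfolding g_def T_def M_def ..
      finally show "f x = g (Suc k) x" .
    qed
  qed
  show ?thesis
  proof
    fix x assume x: "x \<in> prodX n X"
    have "f x = g n x" using main x by simp
    also have "\<dots> = p0 n f zero one (\<lambda>i. \<phi> i (x i))"
    proof -
      have "sa n x I = hat_one n zero one I" for I
        using x unfolding sa_def hat_one_def prodX_def by (auto simp: PiE_def extensional_def)
      thus ?thesis unfolding g_def p0_def by simp
    qed
    finally show "f x = p0 n f zero one (\<lambda>i. \<phi> i (x i))" .
  qed
qed

end
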